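(* For $n\ge 1$ and all integers $k$, the numbers $T(n,k)$ satisfy $$T(n,k)=\lceil k/2\rceil T(n-1,k)+T(n-1,k-1)+(n-k+1)T(n-1,k-2),$$ with initial conditions $T(0,0)=1$ and $T(0,k)=0$ for $k\ne 0$.
   Context: For a permutation $\pi$ of $[n]=\{1,\dots,n\}$, a double descent is an index $i\in[n-2]$ with $\pi(i)>\pi(i+1)>\pi(i+2)$; $\pi$ is simsun if for every $k\in[n]$ the subword of $\pi$ consisting of the letters in $[k]$ (in order of appearance) has no double descents. Let $\mathcal{RS}_n$ be the set of simsun permutations of $[n]$. The number of up-down runs ${\rm uprun}(\pi)$ is the number of alternating runs of the sequence $0,\pi(1),\pi(2),\dots,\pi(n)$, i.e. one plus the number of interior positions of this sequence at which it changes direction (from increasing to decreasing or vice versa). Let $T(n,k)=\#\{\pi\in\mathcal{RS}_n:{\rm uprun}(\pi)=k\}$ for $n\ge1$ (and $T(n,k)=0$ for $k<0$). *)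

theory Defs
  imports Complex_Main
begin

definition is_perm :: "nat \<Rightarrow> nat list \<Rightarrow> bool" where
  "is_perm n xs \<longleftrightarrow> distinct xs \<and> set xs = {1..n}"

definition has_double_descent :: "nat list \<Rightarrow> bool" where
  "has_double_descent ys \<longleftrightarrow>
     (\<exists>i. i + 2 < length ys \<and> ys ! i > ys ! (i+1) \<and> ys ! (i+1) > ys ! (i+2))"

definition simsun :: "nat \<Rightarrow> nat list \<Rightarrow> bool" where
  "simsun n xs \<longleftrightarrow> (\<forall>k\<in>{1..n}. \<not> has_double_descent (filter (\<lambda>x. x \<le> k) xs))"

definition RS :: "nat \<Rightarrow> nat list set" where
  "RS n = {xs. is_perm n xs \<and> simsun n xs}"

text \<open>Number of alternating runs of the sequence 0, pi(1), ..., pi(n):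
  one plus the number of interior positions where the direction changes.\<close>

definition uprun :: "nat list \<Rightarrow> nat" where
  "uprun xs = (let s = 0 # xs in
     1 + card {j. 1 \<le> j \<and> j + 1 < length s \<and> ((s!(j-1) < s!j) \<noteq> (s!j < s!(j+1)))})"

definition T :: "nat \<Rightarrow> int \<Rightarrow> int" where
  "T n k = (if n = 0 then (if k = 0 then 1 else 0)
            else if k < 0 then 0
            else int (card {xs \<in> RS n. int (uprun xs) = k}))"

end

theory Submission
  imports Defs
begin


fun steps :: "nat list \<Rightarrow> bool list" where
 "steps (a#b#xs) = (a<b) # steps (b#xs)" | "steps _ = []"
fun chg :: "bool list \<Rightarrow> nat" where
 "chg (a#b#xs) = (if a \<noteq> b then 1 else 0) + chg (b#xs)" | "chg _ = 0"
fun nff :: "bool list \<Rightarrow> bool" where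
 "nff (a#b#xs) = ((a \<or> b) \<and> nff (b#xs))" | "nff _ = True"
fun ndd :: "nat list \<Rightarrow> bool" where
 "ndd (a#b#c#xs) = (\<not>(b < a \<and> c < b) \<and> ndd (b#c#xs))" | "ndd _ = True"
fun allins :: "bool list \<Rightarrow> bool list list" where
 "allins [] = [[True]]" | "allins (b#bs) = (True#False#bs) # map (Cons b) (allins bs)"

lemma length_allins[simp]: "length (allins bs) = Suc (length bs)"
  by (induction bs) auto

lemma length_steps[simp]: "length (steps s) = length s - 1"
  by (induction s rule: steps.induct) auto

lemma card_chg:
  "card {j. 1 \<le> j \<and> j+1 < length s \<and> ((s!(j-1) < s!j) \<noteq> (s!j < s!(j+1)))} = chg (steps s)"
proof (induction s rule: ndd.induct)
  case (1 a b c xs)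
  let ?Q = "\<lambda>s j. 1 \<le> j \<and> j+1 < length s \<and> ((s!(j-1) < s!j) \<noteq> (s!j < s!(j+1)))"
  have eq: "{j. ?Q (a#b#c#xs) j} = {j. j = 1 \<and> ((a<b) \<noteq> (b<c))} \<union> Suc ` {j. ?Q (b#c#xs) j}"
  proof (intro set_eqI iffI)
    fix j assume "j \<in> {j. ?Q (a#b#c#xs) j}"
    then show "j \<in> {j. j = 1 \<and> ((a<b) \<noteq> (b<c))} \<union> Suc ` {j. ?Q (b#c#xs) j}"
    proof (cases j)
      case (Suc j')
      with \<open>j \<in> _\<close> show ?thesis
        by (cases j') (auto simp: image_iff nth_Cons')
    qed auto
  next
    fix j assume "j \<in> {j. j = 1 \<and> ((a<b) \<noteq> (b<c))} \<union> Suc ` {j. ?Q (b#c#xs) j}"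
    then show "j \<in> {j. ?Q (a#b#c#xs) j}"
      by (auto simp: nth_Cons')
  qed
  have fin: "finite {j. ?Q (b#c#xs) j}" by (rule finite_subset[of _ "{..<length (b#c#xs)}"]) auto
  have "card {j. ?Q (a#b#c#xs) j} = card {j::nat. j = 1 \<and> ((a<b) \<noteq> (b<c))} + card (Suc ` {j. ?Q (b#c#xs) j})"
    unfolding eq
    by (subst card_Un_disjoint) (use fin in auto)
  also have "\<dots> = (if (a<b) \<noteq> (b<c) then 1 else 0) + chg (steps (b#c#xs))"
    using 1 by (simp add: card_image)
  finally show ?case by simp
next
  case ("2_1") then show ?case by simp
next
  case ("2_2" a) then show ?case by simp
next
  case ("2_3" a b) 
  have "{j. 1 \<le> j \<and> j+1 < length [a,b] \<and> Q j} = {}" for Q by auto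
  then show ?case by simp
qed

lemma hdd_ndd: "\<not> has_double_descent ys \<longleftrightarrow> ndd ys"
proof (induction ys rule: ndd.induct)
  case (1 a b c xs)
  have "has_double_descent (a#b#c#xs) \<longleftrightarrow> (b < a \<and> c < b) \<or> has_double_descent (b#c#xs)"
    unfolding has_double_descent_def
  proof
    assume "\<exists>i. i + 2 < length (a # b # c # xs) \<and> (a # b # c # xs) ! (i + 1) < (a # b # c # xs) ! i \<and>
        (a # b # c # xs) ! (i + 2) < (a # b # c # xs) ! (i + 1)"
    then obtain i where i: "i + 2 < length (a # b # c # xs) \<and> (a # b # c # xs) ! (i + 1) < (a # b # c # xs) ! i \<and>
        (a # b # c # xs) ! (i + 2) < (a # b # c # xs) ! (i + 1)" by blast
    show "(b < a \<and> c < b) \<or> (\<exists>i. i + 2 < length (b # c # xs) \<and> (b # c # xs) ! (i + 1) < (b # c # xs) ! i \<and>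
        (b # c # xs) ! (i + 2) < (b # c # xs) ! (i + 1))"
    proof (cases i)
      case 0 then show ?thesis using i by simp
    next
      case (Suc i') then show ?thesis using i by (intro disjI2 exI[of _ i']) auto
    qed
  next
    assume "(b < a \<and> c < b) \<or> (\<exists>i. i + 2 < length (b # c # xs) \<and> (b # c # xs) ! (i + 1) < (b # c # xs) ! i \<and>
        (b # c # xs) ! (i + 2) < (b # c # xs) ! (i + 1))"
    then show "\<exists>i. i + 2 < length (a # b # c # xs) \<and> (a # b # c # xs) ! (i + 1) < (a # b # c # xs) ! i \<and>
        (a # b # c # xs) ! (i + 2) < (a # b # c # xs) ! (i + 1)"
    proof
      assume "b < a \<and> c < b" then show ?thesis by (intro exI[of _ 0]) auto
    next
      assume "\<exists>i. i + 2 < length (b # c # xs) \<and> (b # c # xs) ! (i + 1) < (b # c # xs) ! i \<and>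
        (b # c # xs) ! (i + 2) < (b # c # xs) ! (i + 1)"
      then obtain i where "i + 2 < length (b # c # xs) \<and> (b # c # xs) ! (i + 1) < (b # c # xs) ! i \<and>
        (b # c # xs) ! (i + 2) < (b # c # xs) ! (i + 1)" by blast
      then show ?thesis by (intro exI[of _ "Suc i"]) auto
    qed
  qed
  then show ?case using 1 by simp
qed (auto simp: has_double_descent_def)

lemma ndd_nff: "distinct ys \<Longrightarrow> ndd ys \<longleftrightarrow> nff (steps ys)"
  by (induction ys rule: ndd.induct) (auto simp: less_le)

lemma ndd_0: "ndd (0 # ys) \<longleftrightarrow> ndd ys"
  by (cases ys rule: ndd.cases) auto




definition ins :: "nat \<Rightarrow> nat \<Rightarrow> nat list \<Rightarrow> nat list" where
  "ins M j xs = take j xs @ M # drop j xs"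

lemma steps_ins:
  "i < length s \<Longrightarrow> \<forall>x\<in>set s. x < M \<Longrightarrow> steps (ins M (Suc i) s) = allins (steps s) ! i"
proof (induction s arbitrary: i)
  case Nil then show ?case by simp
next
  case (Cons a s')
  show ?case
  proof (cases i)
    case 0
    then show ?thesis using Cons.prems by (cases s') (auto simp: ins_def)
  next
    case (Suc i')
    then obtain c s'' where s': "s' = c # s''" using Cons.prems by (cases s') auto
    have "ins M (Suc i) (a#s') = a # c # ins M i' s''" using Suc s' by (simp add: ins_def)
    moreover have "c # ins M i' s'' = ins M (Suc i') s'" using s' by (simp add: ins_def)
    moreover have "steps (ins M (Suc i') s') = allins (steps s') ! i'"
      using Cons Suc by auto
    moreover have "i' < length (allins (steps s'))" using Cons.prems Suc by auto
    moreover have "steps (a # c # ins M i' s'') = (a<c) # steps (c # ins M i' s'')" by simp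
    ultimately show ?thesis using Suc s' by (simp del: steps.simps) simp
  qed
qed

lemma allinsT: "l \<in> set (allins (True # x)) \<Longrightarrow> \<exists>r. l = True # r"
  by auto

lemma len_filter_Cons: "length (filter P (x#xs)) = (if P x then 1 else 0) + length (filter P xs)"
  by simp

lemma nff_TT: "nff (True # True # r) = nff (True # r)" by simp
lemma chg_TT: "chg (True # True # r) = chg (True # r)" by simp

lemma count_lemma:
  "nff (True#bs) \<Longrightarrow>
   int (length (filter (\<lambda>l. nff l \<and> int (chg l) = t) (allins (True#bs)))) =
     (if t = int (chg (True#bs)) then (int (chg (True#bs)) + 2) div 2 else 0)
   + (if t = int (chg (True#bs)) + 1 then 1 else 0)
   + (if t = int (chg (True#bs)) + 2 then int (length bs) - int (chg (True#bs)) else 0)"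
proof (induction bs arbitrary: t rule: length_induct)
  case (1 bs)
  show ?case
  proof (cases bs)
    case Nil
    then show ?thesis by auto
  next
    case (Cons b bs')
    show ?thesis
    proof (cases b)
      case True
      have nf: "nff (True # bs')" using 1(2) Cons True by simp
      have IH: "int (length (filter (\<lambda>l. nff l \<and> int (chg l) = t) (allins (True#bs')))) =
         (if t = int (chg (True#bs')) then (int (chg (True#bs')) + 2) div 2 else 0)
       + (if t = int (chg (True#bs')) + 1 then 1 else 0)
       + (if t = int (chg (True#bs')) + 2 then int (length bs') - int (chg (True#bs')) else 0)"
        using 1(1) Cons nf by auto
      have fe: "filter (\<lambda>l. nff l \<and> int (chg l) = t) (map (Cons True) (allins (True#bs')))
          = map (Cons True) (filter (\<lambda>l. nff l \<and> int (chg l) = t) (allins (True#bs')))"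
        by (auto simp del: allins.simps simp: filter_map o_def intro!: filter_cong dest!: allinsT)
      have "allins (True#bs) = (True#False#True#bs') # map (Cons True) (allins (True#bs'))"
        using Cons True by simp
      moreover have "chg (True#bs) = chg (True#bs')" using Cons True by simp
      moreover have "chg (True#False#True#bs') = 2 + chg (True#bs')" by simp
      moreover have "nff (True#False#True#bs')" using nf by simp
      ultimately have L: "length (filter (\<lambda>l. nff l \<and> int (chg l) = t) (allins (True#bs))) =
        (if t = int (chg (True#bs)) + 2 then 1 else 0) + length (filter (\<lambda>l. nff l \<and> int (chg l) = t) (allins (True#bs')))"
        apply (simp only: \<open>allins (True#bs) = _\<close> len_filter_Cons fe length_map)
        using \<open>chg (True#bs) = chg (True#bs')\<close> \<open>chg (True#False#True#bs') = 2 + chg (True#bs')\<close> \<open>nff (True#False#True#bs')\<close>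
        by (simp del: allins.simps nff.simps chg.simps)
      show ?thesis unfolding L using IH Cons \<open>chg (True#bs) = chg (True#bs')\<close> by auto
    next
      case False
      show ?thesis
      proof (cases bs')
        case Nil
        then show ?thesis using Cons False by auto
      next
        case (Cons b3 bs3)
        have b3: "b3" using 1(2) \<open>bs = b # bs'\<close> False Cons by auto
        have nf: "nff (True # bs3)" using 1(2) \<open>bs = b # bs'\<close> False Cons b3 by simp
        have IH: "int (length (filter (\<lambda>l. nff l \<and> int (chg l) = t - 2) (allins (True#bs3)))) =
           (if t - 2 = int (chg (True#bs3)) then (int (chg (True#bs3)) + 2) div 2 else 0)
         + (if t - 2 = int (chg (True#bs3)) + 1 then 1 else 0)
         + (if t - 2 = int (chg (True#bs3)) + 2 then int (length bs3) - int (chg (True#bs3)) else 0)"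
          by (rule 1(1)[rule_format]) (use \<open>bs = b # bs'\<close> Cons nf in simp_all)
        have fe: "filter (\<lambda>l. nff l \<and> int (chg l) = t) (map (Cons True) (map (Cons False) (allins (True#bs3))))
          = map (Cons True) (map (Cons False) (filter (\<lambda>l. nff l \<and> int (chg l) = t - 2) (allins (True#bs3))))"
        proof -
          have "filter ((\<lambda>l. nff l \<and> int (chg l) = t) \<circ> (\<lambda>l. True # False # l)) (allins (True#bs3))
               = filter (\<lambda>l. nff l \<and> int (chg l) = t - 2) (allins (True#bs3))"
            by (rule filter_cong) (auto dest!: allinsT simp del: allins.simps)
          then show ?thesis by (simp del: allins.simps add: filter_map o_def)
        qed
        have al: "allins (True#bs) = (True#False#False#True#bs3) # (True#True#False#True#bs3) #
             map (Cons True) (map (Cons False) (allins (True#bs3)))"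
          using \<open>bs = b # bs'\<close> False Cons b3 by simp
        have c1: "chg (True#bs) = 2 + chg (True#bs3)" using \<open>bs = b # bs'\<close> False Cons b3 by simp
        have c2: "chg (True#True#False#True#bs3) = 2 + chg (True#bs3)" by simp
        have n1: "nff (True#True#False#True#bs3)" using nf by simp
        have n2: "\<not> nff (True#False#False#True#bs3)" by simp
        have lb: "length bs = length bs3 + 2" using \<open>bs = b # bs'\<close> Cons by simp
        have L: "length (filter (\<lambda>l. nff l \<and> int (chg l) = t) (allins (True#bs))) =
          (if t = int (chg (True#bs)) then 1 else 0) + length (filter (\<lambda>l. nff l \<and> int (chg l) = t - 2) (allins (True#bs3)))"
          apply (simp only: al len_filter_Cons fe length_map)
          using c1 c2 n1 n2 by (simp del: allins.simps nff.simps chg.simps)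
        have e1: "int (chg (True#bs)) = int (chg (True#bs3)) + 2" using c1 by simp
        show ?thesis unfolding L of_nat_add e1 lb IH
          by (simp del: chg.simps allins.simps nff.simps split: if_split) presburger
      qed
    qed
  qed
qed




lemma filter_take_drop[simp]: "filter P (take j s) @ filter P (drop j s) = filter P s"
  by (metis append_take_drop_id filter_append)

lemma set_take_drop'[simp]: "set (take j s) \<union> set (drop j s) = set s"
  by (metis append_take_drop_id set_append)

lemma uprun_chg: "uprun xs = 1 + chg (steps (0#xs))"
  unfolding uprun_def Let_def card_chg by simp

lemma T_card: "n \<ge> 1 \<Longrightarrow> T n k = int (card {xs\<in>RS n. int (uprun xs) = k})"
  unfolding T_def by auto

lemma RS_len: "xs \<in> RS n \<Longrightarrow> length xs = n"
  unfolding RS_def is_perm_def using distinct_card by fastforce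

lemma finite_RS: "finite (RS n)"
proof (rule finite_subset)
  show "RS n \<subseteq> {xs. set xs \<subseteq> {1..n} \<and> length xs = n}"
    using RS_len by (auto simp: RS_def is_perm_def)
  show "finite {xs. set xs \<subseteq> {1..n} \<and> length xs = n}"
    by (rule finite_lists_length_eq) simp
qed

lemma RS_nhdd: "n \<ge> 1 \<Longrightarrow> xs \<in> RS n \<Longrightarrow> \<not> has_double_descent xs"
proof -
  assume a: "n \<ge> 1" "xs \<in> RS n"
  then have "\<forall>k\<in>{1..n}. \<not> has_double_descent (filter (\<lambda>x. x \<le> k) xs)" "set xs = {1..n}"
    by (auto simp: RS_def simsun_def is_perm_def)
  moreover have "n \<in> {1..n}" using a by simp
  ultimately have "\<not> has_double_descent (filter (\<lambda>x. x \<le> n) xs)" by blast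
  moreover have "filter (\<lambda>x. x \<le> n) xs = xs" using \<open>set xs = _\<close> by (auto simp: filter_id_conv)
  ultimately show ?thesis by simp
qed

lemma filter_ins: "n \<notin> set s \<Longrightarrow> filter (\<lambda>x. x \<noteq> n) (ins n j s) = s"
proof -
  assume a: "n \<notin> set s"
  have "filter (\<lambda>x. x \<noteq> n) (take j s) = take j s" "filter (\<lambda>x. x \<noteq> n) (drop j s) = drop j s"
    using a by (auto simp: filter_id_conv dest: in_set_takeD in_set_dropD)
  then show ?thesis unfolding ins_def by simp
qed

lemma takeWhile_ins: "n \<notin> set s \<Longrightarrow> takeWhile (\<lambda>x. x \<noteq> n) (ins n j s) = take j s"
proof -
  assume a: "n \<notin> set s"
  then have "\<forall>x\<in>set (take j s). x \<noteq> n" by (auto dest: in_set_takeD)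
  then show ?thesis unfolding ins_def by simp
qed

lemma ins_inj: "n \<notin> set s \<Longrightarrow> j \<le> length s \<Longrightarrow> j' \<le> length s \<Longrightarrow> ins n j s = ins n j' s \<Longrightarrow> j = j'"
proof -
  assume a: "n \<notin> set s" "j \<le> length s" "j' \<le> length s" "ins n j s = ins n j' s"
  then have "take j s = take j' s" using takeWhile_ins[OF a(1)] by metis
  then have "length (take j s) = length (take j' s)" by simp
  then show ?thesis using a(2,3) by simp
qed

lemma set_ins: "set (ins n j s) = insert n (set s)"
proof -
  have "set (ins n j s) = insert n (set (take j s @ drop j s))" unfolding ins_def by auto
  then show ?thesis by simp
qed

lemma distinct_ins: "distinct s \<Longrightarrow> n \<notin> set s \<Longrightarrow> distinct (ins n j s)"
proof -
  assume "distinct s" "n \<notin> set s"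
  then have "distinct (take j s @ drop j s)" "n \<notin> set (take j s @ drop j s)" by simp_all
  then show ?thesis unfolding ins_def by (auto simp del: append_take_drop_id dest: in_set_takeD in_set_dropD)
qed

lemma filter_le_ins: "k < n \<Longrightarrow> filter (\<lambda>x. x \<le> k) (ins n j s) = filter (\<lambda>x. x \<le> k) s"
proof -
  assume "k < n"
  then have "filter (\<lambda>x. x \<le> k) (ins n j s) = filter (\<lambda>x. x \<le> k) (take j s @ drop j s)"
    unfolding ins_def by simp
  then show ?thesis by simp
qed

lemma mem1:
  assumes "n \<ge> 1" "s \<in> RS (n-1)" "\<not> has_double_descent (ins n j s)"
  shows "ins n j s \<in> RS n"
proof -
  have s: "distinct s" "set s = {1..n-1}" "\<And>k. k\<in>{1..n-1} \<Longrightarrow> \<not> has_double_descent (filter (\<lambda>x. x \<le> k) s)"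
    using assms(2) by (auto simp: RS_def is_perm_def simsun_def)
  have ns: "n \<notin> set s" using s(2) assms(1) by auto
  have "is_perm n (ins n j s)"
    unfolding is_perm_def using distinct_ins[OF s(1) ns] set_ins[of n j s] s(2) assms(1) by auto
  moreover have "simsun n (ins n j s)"
    unfolding simsun_def
  proof
    fix k assume k: "k \<in> {1..n}"
    show "\<not> has_double_descent (filter (\<lambda>x. x \<le> k) (ins n j s))"
    proof (cases "k = n")
      case True
      have "filter (\<lambda>x. x \<le> k) (ins n j s) = ins n j s"
        using True set_ins[of n j s] s(2) by (auto simp: filter_id_conv)
      then show ?thesis using assms(3) by simp
    next
      case False
      then show ?thesis using k s(3) filter_le_ins[of k n j s] by auto
    qed
  qed
  ultimately show ?thesis by (simp add: RS_def)
qed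

lemma mem2:
  assumes "n \<ge> 1" "p \<in> RS n"
  shows "\<exists>s j. s \<in> RS (n-1) \<and> j < n \<and> p = ins n j s"
proof -
  have p: "distinct p" "set p = {1..n}" "\<And>k. k\<in>{1..n} \<Longrightarrow> \<not> has_double_descent (filter (\<lambda>x. x \<le> k) p)"
    using assms(2) by (auto simp: RS_def is_perm_def simsun_def)
  then have "n \<in> set p" using assms(1) by auto
  then obtain A B where AB: "p = A @ n # B" by (meson split_list)
  have nA: "n \<notin> set A" "n \<notin> set B" using p(1) AB by auto
  define s where "s = A @ B"
  have pins: "p = ins n (length A) s" unfolding s_def ins_def AB by simp
  have "distinct s" using p(1) AB by (simp add: s_def)
  moreover have "set s = {1..n-1}"
  proof -
    have "set p = insert n (set s)" unfolding s_def AB by auto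
    then have "set s = set p - {n}" using nA by (auto simp: s_def)
    then show ?thesis using p(2) by auto
  qed
  moreover have "\<not> has_double_descent (filter (\<lambda>x. x \<le> k) s)" if "k \<in> {1..n-1}" for k
  proof -
    have k: "k < n" "k \<in> {1..n}" using that assms(1) by auto
    have "filter (\<lambda>x. x \<le> k) p = filter (\<lambda>x. x \<le> k) s"
      using filter_le_ins[OF k(1), of "length A" s] pins by simp
    then show ?thesis using p(3)[OF k(2)] by simp
  qed
  ultimately have "s \<in> RS (n-1)" by (auto simp: RS_def is_perm_def simsun_def)
  moreover have "length A < n" using RS_len[OF assms(2)] AB by simp
  ultimately show ?thesis using pins by blast
qed




lemma ceil_half: "\<lceil>real_of_int k / 2\<rceil> = (k + 1) div 2"
proof -
  have "\<lceil>real_of_int k / 2\<rceil> = - \<lfloor>real_of_int (-k) / real_of_int 2\<rfloor>"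
    by (simp add: ceiling_def)
  also have "\<dots> = - ((-k) div 2)" by (simp only: floor_divide_of_int_eq)
  also have "\<dots> = (k + 1) div 2" by presburger
  finally show ?thesis .
qed

lemma sum_if_card: "finite A \<Longrightarrow> (\<Sum>x\<in>A. if f x = k then (c::int) else 0) = c * int (card {x\<in>A. f x = k})"
  by (simp add: sum.inter_filter[symmetric])

lemma count_sigma:
  assumes n2: "n \<ge> 2" and sR: "s \<in> RS (n-1)"
  shows "int (card {j. j<n \<and> \<not> has_double_descent (ins n j s) \<and> int (uprun (ins n j s)) = k}) =
     (if int (uprun s) = k then (k+1) div 2 else 0) + (if int (uprun s) = k-1 then 1 else 0)
     + (if int (uprun s) = k-2 then int n - k + 1 else 0)"
proof -
  have ds: "distinct s" and ss: "set s = {1..n-1}" using sR by (auto simp: RS_def is_perm_def)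
  have ls: "length s = n - 1" using RS_len[OF sR] .
  have nh: "\<not> has_double_descent s" using RS_nhdd[OF _ sR] n2 by simp
  obtain a r where ar: "s = a # r" using ls n2 by (cases s) auto
  have "a \<in> set s" using ar by simp
  then have a0: "0 < a" using ss by auto
  define bs where "bs = steps (0#s)"
  have bs2: "bs = True # steps s" using ar a0 by (simp add: bs_def)
  have d0s: "distinct (0#s)" using ds ss by auto
  have nfb: "nff bs" unfolding bs_def using nh hdd_ndd ndd_0 ndd_nff[OF d0s] by simp
  have ns: "n \<notin> set s" using ss n2 by auto
  let ?P = "\<lambda>l. nff l \<and> int (chg l) = k - 1"
  have seteq: "{j. j<n \<and> \<not> has_double_descent (ins n j s) \<and> int (uprun (ins n j s)) = k}
      = {j. j < length (allins bs) \<and> ?P (allins bs ! j)}"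
  proof -
    have "(\<not> has_double_descent (ins n j s) \<and> int (uprun (ins n j s)) = k) = ?P (allins bs ! j)"
      if j: "j < n" for j
    proof -
      have lt: "\<forall>x\<in>set (0#s). x<n" using ss n2 by auto
      have "steps (ins n (Suc j) (0#s)) = allins (steps (0#s)) ! j"
        using steps_ins[OF _ lt, of j] j ls n2 by simp
      then have "allins bs ! j = steps (ins n (Suc j) (0#s))" by (simp add: bs_def)
      also have "ins n (Suc j) (0#s) = 0 # ins n j s" by (simp add: ins_def)
      finally have e: "allins bs ! j = steps (0 # ins n j s)" .
      have d: "distinct (0 # ins n j s)" using distinct_ins[OF ds ns] set_ins[of n j s] ss n2 by auto
      have "(\<not> has_double_descent (ins n j s)) = nff (steps (0 # ins n j s))"
        using hdd_ndd ndd_0 ndd_nff[OF d] by simp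
      moreover have "int (uprun (ins n j s)) = 1 + int (chg (steps (0 # ins n j s)))"
        by (simp add: uprun_chg)
      ultimately show ?thesis using e by auto
    qed
    moreover have "length (allins bs) = n" unfolding bs_def using ls n2 by simp
    ultimately show ?thesis by auto
  qed
  have "int (card {j. j<n \<and> \<not> has_double_descent (ins n j s) \<and> int (uprun (ins n j s)) = k})
      = int (length (filter ?P (allins (True # steps s))))"
    unfolding seteq length_filter_conv_card bs2 ..
  also have "\<dots> = (if k - 1 = int (chg (True#steps s)) then (int (chg (True#steps s)) + 2) div 2 else 0)
   + (if k - 1 = int (chg (True#steps s)) + 1 then 1 else 0)
   + (if k - 1 = int (chg (True#steps s)) + 2 then int (length (steps s)) - int (chg (True#steps s)) else 0)"
    by (rule count_lemma) (use nfb bs2 in simp)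
  also have "int (chg (True#steps s)) = int (uprun s) - 1"
    using bs2 by (simp add: uprun_chg bs_def)
  also have "int (length (steps s)) = int n - 2" using ls n2 by simp
  finally show ?thesis by auto
qed

lemma main_card:
  assumes n2: "n \<ge> 2"
  shows "int (card {p\<in>RS n. int (uprun p) = k}) =
     (\<Sum>s\<in>RS (n-1). int (card {j. j<n \<and> \<not> has_double_descent (ins n j s) \<and> int (uprun (ins n j s)) = k}))"
proof -
  define J where "J s = {j. j<n \<and> \<not> has_double_descent (ins n j s) \<and> int (uprun (ins n j s)) = k}" for s
  have eq: "{p\<in>RS n. int (uprun p) = k} = (\<Union>s\<in>RS (n-1). (\<lambda>j. ins n j s) ` J s)"
  proof (intro set_eqI iffI)
    fix p assume p: "p \<in> {p\<in>RS n. int (uprun p) = k}"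
    then have pR: "p \<in> RS n" and pk: "int (uprun p) = k" by auto
    obtain s j where sj: "s \<in> RS (n-1)" "j < n" "p = ins n j s" using mem2[of n p] n2 pR by auto
    have "\<not> has_double_descent p" using RS_nhdd[of n p] pR n2 by simp
    then have "j \<in> J s" unfolding J_def using sj pk by simp
    then show "p \<in> (\<Union>s\<in>RS (n-1). (\<lambda>j. ins n j s) ` J s)" using sj by blast
  next
    fix p assume "p \<in> (\<Union>s\<in>RS (n-1). (\<lambda>j. ins n j s) ` J s)"
    then obtain s j where sj: "s \<in> RS (n-1)" "j \<in> J s" "p = ins n j s" by blast
    then have "\<not> has_double_descent (ins n j s)" "int (uprun (ins n j s)) = k" unfolding J_def by simp_all
    moreover have "ins n j s \<in> RS n" using mem1[OF _ sj(1)] n2 calculation(1) by simp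
    ultimately show "p \<in> {p\<in>RS n. int (uprun p) = k}" using sj(3) by simp
  qed
  have nsR: "n \<notin> set s" if "s \<in> RS (n-1)" for s
  proof -
    have "set s = {1..n-1}" using that by (simp add: RS_def is_perm_def)
    then show ?thesis using n2 by auto
  qed
  have "card (\<Union>s\<in>RS (n-1). (\<lambda>j. ins n j s) ` J s) = (\<Sum>s\<in>RS (n-1). card ((\<lambda>j. ins n j s) ` J s))"
  proof (rule card_UN_disjoint)
    show "finite (RS (n-1))" by (rule finite_RS)
    show "\<forall>s\<in>RS (n-1). finite ((\<lambda>j. ins n j s) ` J s)"
    proof
      fix s
      have "J s \<subseteq> {..<n}" unfolding J_def by blast
      then have "finite (J s)" using finite_subset by blast
      then show "finite ((\<lambda>j. ins n j s) ` J s)" by (rule finite_imageI)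
    qed
    show "\<forall>s\<in>RS (n-1). \<forall>s'\<in>RS (n-1). s \<noteq> s' \<longrightarrow> (\<lambda>j. ins n j s) ` J s \<inter> (\<lambda>j. ins n j s') ` J s' = {}"
    proof (intro ballI impI)
      fix s s' assume s: "s \<in> RS (n-1)" and s': "s' \<in> RS (n-1)" and ne: "s \<noteq> s'"
      { fix j j' assume e: "ins n j s = ins n j' s'"
        have "s = filter (\<lambda>x. x \<noteq> n) (ins n j s)" using filter_ins[OF nsR[OF s]] by simp
        also have "\<dots> = filter (\<lambda>x. x \<noteq> n) (ins n j' s')" using e by simp
        also have "\<dots> = s'" using filter_ins[OF nsR[OF s']] by simp
        finally have "s = s'" . }
      then show "(\<lambda>j. ins n j s) ` J s \<inter> (\<lambda>j. ins n j s') ` J s' = {}" using ne by blast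
    qed
  qed
  also have "\<dots> = (\<Sum>s\<in>RS (n-1). card (J s))"
  proof (rule sum.cong)
    fix s assume s: "s \<in> RS (n-1)"
    have ls: "length s = n - 1" using RS_len[OF s] .
    have "inj_on (\<lambda>j. ins n j s) (J s)"
    proof (rule inj_onI)
      fix j j' assume "j \<in> J s" "j' \<in> J s" "ins n j s = ins n j' s"
      moreover have "j \<le> length s" "j' \<le> length s" using calculation(1,2) ls unfolding J_def by auto
      ultimately show "j = j'" using ins_inj[OF nsR[OF s]] by blast
    qed
    then show "card ((\<lambda>j. ins n j s) ` J s) = card (J s)" by (rule card_image)
  qed simp
  finally have "card {p\<in>RS n. int (uprun p) = k} = (\<Sum>s\<in>RS (n-1). card (J s))" unfolding eq .
  then have "int (card {p\<in>RS n. int (uprun p) = k}) = (\<Sum>s\<in>RS (n-1). int (card (J s)))"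
    by (simp add: of_nat_sum)
  then show ?thesis unfolding J_def .
qed

lemma RS1: "RS 1 = {[1]}"
proof (intro set_eqI iffI)
  fix xs :: "nat list" assume "xs \<in> RS 1"
  then have "length xs = 1" "set xs = {1}" using RS_len by (auto simp: RS_def is_perm_def)
  then show "xs \<in> {[1]}" by (cases xs) auto
next
  fix xs :: "nat list" assume "xs \<in> {[1]}"
  then show "xs \<in> RS 1"
    by (auto simp: RS_def is_perm_def simsun_def has_double_descent_def)
qed

theorem theorem9:
  shows "(\<forall>(n::nat) (k::int). n \<ge> 1 \<longrightarrow>
            T n k = \<lceil>real_of_int k / 2\<rceil> * T (n-1) k + T (n-1) (k-1)
                    + (int n - k + 1) * T (n-1) (k-2))
         \<and> T 0 0 = 1 \<and> (\<forall>k::int. k \<noteq> 0 \<longrightarrow> T 0 k = 0)"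
proof (intro conjI allI impI)
  fix n :: nat and k :: int
  assume n1: "n \<ge> 1"
  show "T n k = \<lceil>real_of_int k / 2\<rceil> * T (n-1) k + T (n-1) (k-1) + (int n - k + 1) * T (n-1) (k-2)"
  proof (cases "n = 1")
    case True
    have u: "uprun [1] = 1" by (simp add: uprun_chg)
    have c: "{xs \<in> RS 1. int (uprun xs) = k} = (if k = 1 then {[1]} else {})"
      unfolding RS1 using u by auto
    have "T 1 k = (if k = 1 then 1 else 0)"
      using T_card[of 1 k] by (simp only: c) simp
    then have "T n k = (if k = 1 then 1 else 0)" using True by simp
    then show ?thesis using True by (simp add: T_def ceil_half)
  next
    case False
    then have n2: "n \<ge> 2" using n1 by simp
    have "T n k = (\<Sum>s\<in>RS (n-1). (if int (uprun s) = k then (k+1) div 2 else 0) + (if int (uprun s) = k-1 then 1 else 0)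
     + (if int (uprun s) = k-2 then int n - k + 1 else 0))"
      using T_card[OF n1] main_card[OF n2] count_sigma[OF n2] by simp
    also have "\<dots> = (k+1) div 2 * T (n-1) k + T (n-1) (k-1) + (int n - k + 1) * T (n-1) (k-2)"
      using T_card[of "n-1"] n2 finite_RS[of "n-1"]
      by (simp add: sum.distrib sum_if_card[OF finite_RS, where f="\<lambda>s. int (uprun s)"]
            sum_if_card[OF finite_RS, where f="\<lambda>s. int (uprun s)" and k="k-1" and c=1, simplified])
    finally show ?thesis by (simp add: ceil_half)
  qed
qed (simp_all add: T_def)


end
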